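(* Let $u\in S^{n-1}$ and $K\in\mathcal S_n$. Then $M_uK\in\mathcal S_n$ and $M_u(K^c)=(M_uK)^c$. Moreover $\mathrm{Vol}(M_u(K^c))\ge \mathrm{Vol}(K^c)$.
   Context: For $x\in\mathbb R^n$, $B(x,1)$ denotes the closed Euclidean ball of radius $1$ centered at $x$. For $A\subseteq\mathbb R^n$, the $c$-dual of $A$ is $A^c=\bigcap_{x\in A}B(x,1)$ (with $\emptyset^c=\mathbb R^n$). The class $\mathcal S_n$ of ball-bodies consists of all sets of the form $A^c$, $A\subseteq\mathbb R^n$, i.e. all intersections of families of closed unit Euclidean balls (including $\emptyset$ and $\mathbb R^n$). For $u\in S^{n-1}$, $R_u$ denotes the reflection with respect to the hyperplane $u^\perp$, and the Minkowski symmetral of $K$ is $M_uK=\frac12K+\frac12R_uK$ (Minkowski sum; the Minkowski sum with $\emptyset$ is $\emptyset$). *)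

theory Defs
  imports "HOL-Analysis.Analysis"
begin

text \<open>c-dual: intersection of closed unit balls centred at points of A (empty set gives UNIV).\<close>
definition cdual :: "'a::euclidean_space set \<Rightarrow> 'a set" where
  "cdual A = (\<Inter>x\<in>A. cball x 1)"

definition ball_bodies :: "'a::euclidean_space set set" where
  "ball_bodies = {cdual A | A. True}"

definition refl_hyp :: "'a::euclidean_space \<Rightarrow> 'a \<Rightarrow> 'a" where
  "refl_hyp u x = x - (2 * (x \<bullet> u)) *\<^sub>R u"

definition msum :: "'a::euclidean_space set \<Rightarrow> 'a set \<Rightarrow> 'a set" where
  "msum A B = {a + b | a b. a \<in> A \<and> b \<in> B}"

definition mink_sym :: "'a::euclidean_space \<Rightarrow> 'a set \<Rightarrow> 'a set" where
  "mink_sym u K = msum ((\<lambda>x. (1/2) *\<^sub>R x) ` K) ((\<lambda>x. (1/2) *\<^sub>R x) ` (refl_hyp u ` K))"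

end

theory Submission
  imports Defs
begin


lemma cdual_mem: "x \<in> cdual A \<longleftrightarrow> (\<forall>a\<in>A. dist a x \<le> 1)"
  by (auto simp: cdual_def)

lemma cdual_anti: "A \<subseteq> B \<Longrightarrow> cdual B \<subseteq> cdual A"
  by (auto simp: cdual_def)

lemma cdual_ext: "A \<subseteq> cdual (cdual A)"
  by (auto simp: cdual_mem) (metis dist_commute)

lemma cdual3: "cdual (cdual (cdual A)) = cdual A"
  by (meson cdual_anti cdual_ext subset_antisym)

lemma bb_cc: "K \<in> ball_bodies \<Longrightarrow> cdual (cdual K) = K"
  by (auto simp: ball_bodies_def cdual3)

lemma closed_cdual: "closed (cdual A)"
  by (auto simp: cdual_def intro!: closed_INT)

lemma convex_cdual: "convex (cdual A)"
  by (auto simp: cdual_def intro!: convex_INT)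

lemma bounded_cdual: "A \<noteq> {} \<Longrightarrow> bounded (cdual A)"
  by (metis INF_lower bounded_cball bounded_subset cdual_def equals0I)

lemma compact_cdual: "A \<noteq> {} \<Longrightarrow> compact (cdual A)"
  by (simp add: bounded_cdual closed_cdual compact_eq_bounded_closed)

lemma cdual_empty: "cdual {} = UNIV"
  by (simp add: cdual_def)

lemma cdual_UNIV: "cdual (UNIV::'a::euclidean_space set) = {}"
proof -
  obtain b :: 'a where b: "b \<in> Basis" using nonempty_Basis by blast
  have "x \<notin> cdual (UNIV::'a set)" for x
  proof
    assume "x \<in> cdual (UNIV::'a set)"
    then have "dist (x + 2 *\<^sub>R b) x \<le> 1" by (auto simp: cdual_mem)
    with b show False by (simp add: dist_norm)
  qed
  then show ?thesis by blast
qed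

lemma refl_inner: "norm u = 1 \<Longrightarrow> refl_hyp u x \<bullet> v = x \<bullet> refl_hyp u v"
  by (simp add: refl_hyp_def inner_diff_left inner_diff_right algebra_simps inner_commute)

lemma refl_refl: "norm u = 1 \<Longrightarrow> refl_hyp u (refl_hyp u x) = x"
proof -
  assume "norm u = 1"
  then have "u \<bullet> u = 1" by (simp add: norm_eq_1)
  then show ?thesis
    by (simp add: refl_hyp_def inner_diff_left algebra_simps)
qed

lemma refl_norm: "norm u = 1 \<Longrightarrow> norm (refl_hyp u x) = norm x"
proof -
  assume a: "norm u = 1"
  have "refl_hyp u x \<bullet> refl_hyp u x = x \<bullet> x"
    using refl_inner[OF a, of x "refl_hyp u x"] refl_refl[OF a] by simp
  then show ?thesis by (simp add: norm_eq_sqrt_inner)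
qed

lemma refl_diff: "refl_hyp u (x - y) = refl_hyp u x - refl_hyp u y"
  by (simp add: refl_hyp_def inner_diff_left algebra_simps)

lemma refl_add: "refl_hyp u (x + y) = refl_hyp u x + refl_hyp u y"
  by (simp add: refl_hyp_def inner_add_left algebra_simps)

lemma refl_scale: "refl_hyp u (c *\<^sub>R x) = c *\<^sub>R refl_hyp u x"
  by (simp add: refl_hyp_def algebra_simps)

lemma linear_refl: "linear (refl_hyp u)"
  by (rule linearI) (simp_all add: refl_add refl_scale)

lemma mink_mem: "z \<in> mink_sym u K \<longleftrightarrow> (\<exists>x\<in>K. \<exists>x'\<in>K. z = (1/2) *\<^sub>R x + (1/2) *\<^sub>R refl_hyp u x')"
  by (auto simp: mink_sym_def msum_def)

lemma mink_sub: "norm u = 1 \<Longrightarrow> mink_sym u (cdual K) \<subseteq> cdual (mink_sym u K)"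
proof
  fix p assume u: "norm u = 1" and "p \<in> mink_sym u (cdual K)"
  then obtain y y' where y: "y \<in> cdual K" "y' \<in> cdual K" and p: "p = (1/2) *\<^sub>R y + (1/2) *\<^sub>R refl_hyp u y'"
    by (auto simp: mink_mem)
  show "p \<in> cdual (mink_sym u K)"
    unfolding cdual_mem
  proof
    fix q assume "q \<in> mink_sym u K"
    then obtain x x' where x: "x \<in> K" "x' \<in> K" and q: "q = (1/2) *\<^sub>R x + (1/2) *\<^sub>R refl_hyp u x'"
      by (auto simp: mink_mem)
    have d1: "norm (x - y) \<le> 1" using x y by (auto simp: cdual_mem dist_norm)
    have d2: "norm (x' - y') \<le> 1" using x y by (auto simp: cdual_mem dist_norm)
    have "q - p = (1/2) *\<^sub>R (x - y) + (1/2) *\<^sub>R refl_hyp u (x' - y')"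
      by (simp add: p q refl_diff algebra_simps)
    then have "norm (q - p) \<le> norm ((1/2) *\<^sub>R (x - y)) + norm ((1/2) *\<^sub>R refl_hyp u (x' - y'))"
      by (metis norm_triangle_ineq)
    also have "\<dots> = (1/2) * norm (x - y) + (1/2) * norm (refl_hyp u (x' - y'))" by simp
    also have "\<dots> \<le> 1" using d1 d2 refl_norm[OF u] by simp
    finally show "dist q p \<le> 1" by (simp add: dist_norm)
  qed
qed

lemma real_key:
  fixes G Gd Gw D ss th X :: real
  assumes "G \<le> 1" "G - 2*Gd + D \<le> 1" "G + 2*Gw + 1 \<ge> 0" "0 \<le> ss" "0 < th" "th < 1"
    "th * X \<le> D - 2* ss"
  shows "G - 2*th*(Gd + ss*Gw) + th^2 * X \<le> 1"
proof -
  have c1: "(1-th+th* ss)*(G-1) \<le> 0"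
    using assms by (intro mult_nonneg_nonpos) auto
  have c2: "th*(G-2*Gd+D-1) \<le> 0"
    using assms by (intro mult_nonneg_nonpos) auto
  have c3: "th* ss*(G+2*Gw+1) \<ge> 0" using assms by simp
  have c4: "th*(D-2* ss-th*X) \<ge> 0" using assms by simp
  have "(1-th+th* ss)*(G-1) + th*(G-2*Gd+D-1) - (G - 2*th*(Gd + ss*Gw) + th^2 * X - 1)
        = th* ss*(G+2*Gw+1) + th*(D-2* ss-th*X)"
    by (simp add: algebra_simps power2_eq_square)
  then show ?thesis using c1 c2 c3 c4 by linarith
qed

lemma support_ball:
  fixes A :: "'a::euclidean_space set"
  assumes w: "norm w = 1" and x: "x \<in> cdual A" and mx: "\<forall>k\<in>cdual A. k \<bullet> w \<le> x \<bullet> w"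
  shows "x - w \<in> cdual (cdual A)"
  unfolding cdual_mem[of "x - w"]
proof (rule ccontr)
  assume "\<not> (\<forall>k\<in>cdual A. dist k (x - w) \<le> 1)"
  then obtain k where k: "k \<in> cdual A" and far: "dist k (x - w) > 1" by auto
  define d where "d = k - x"
  define D where "D = d \<bullet> d"
  define al where "al = d \<bullet> w"
  define ss where "ss = D/4 - al/2"
  define Y where "Y = D - 2* ss"
  define X where "X = D + 2* ss*al + ss^2"
  define th where "th = Y / (\<bar>X\<bar> + 1 + Y)"
  define e where "e = th *\<^sub>R (d + ss *\<^sub>R w)"
  have ww: "w \<bullet> w = 1" using w by (simp add: norm_eq_1)
  have "(norm (k - (x - w)))^2 > 1" using far by (simp add: dist_norm)
  moreover have "k - (x - w) = d + w" by (simp add: d_def)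
  ultimately have "(d + w) \<bullet> (d + w) > 1" by (simp add: power2_norm_eq_inner)
  then have "D + 2*al + 1 > 1"
    by (simp add: D_def al_def inner_add_left inner_add_right ww inner_commute)
  then have Ypos: "Y > 0" by (simp add: Y_def ss_def)
  have al0: "al \<le> 0" using mx k by (simp add: al_def d_def inner_diff_left)
  have D0: "D \<ge> 0" by (simp add: D_def)
  have s0: "ss \<ge> 0" using al0 D0 by (simp add: ss_def)
  have th0: "th > 0" using Ypos by (simp add: th_def)
  have th1: "th < 1" using Ypos by (simp add: th_def)
  have thX: "th * X \<le> Y"
  proof -
    have "th * X \<le> th * \<bar>X\<bar>" using th0 by (simp add: mult_left_mono)
    also have "\<dots> = Y * \<bar>X\<bar> / (\<bar>X\<bar> + 1 + Y)" by (simp add: th_def)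
    also have "\<dots> \<le> Y" using Ypos by (simp add: divide_le_eq)
    finally show ?thesis .
  qed
  have "x + e \<in> cdual A"
    unfolding cdual_mem
  proof
    fix a assume a: "a \<in> A"
    define g where "g = a - x"
    have h1: "g \<bullet> g \<le> 1"
    proof -
      have "dist a x \<le> 1" using x a by (simp add: cdual_mem)
      then have "(norm g)^2 \<le> 1" by (simp add: dist_norm g_def abs_le_square_iff power_le_one)
      then show ?thesis by (simp add: power2_norm_eq_inner)
    qed
    have h2: "(g - d) \<bullet> (g - d) \<le> 1"
    proof -
      have "dist a k \<le> 1" using k a by (simp add: cdual_mem)
      moreover have "a - k = g - d" by (simp add: g_def d_def)
      ultimately have "(norm (g - d))^2 \<le> 1" by (simp add: dist_norm power_le_one)
      then show ?thesis by (simp add: power2_norm_eq_inner)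
    qed
    have h3: "(g + w) \<bullet> (g + w) \<ge> 0" by simp
    have "(g - e) \<bullet> (g - e) = g\<bullet>g - 2*th*(g\<bullet>d + ss*(g\<bullet>w)) + th^2 * X"
      by (simp add: e_def X_def D_def al_def inner_add_left inner_add_right inner_diff_left
          inner_diff_right ww inner_commute algebra_simps power2_eq_square)
    also have "\<dots> \<le> 1"
    proof (rule real_key)
      show "g \<bullet> g - 2 * (g \<bullet> d) + D \<le> 1" using h2
        by (simp add: D_def inner_diff_left inner_diff_right inner_commute)
      show "g \<bullet> g + 2 * (g \<bullet> w) + 1 \<ge> 0" using h3
        by (simp add: ww inner_add_left inner_add_right inner_commute)
    qed (use h1 s0 th0 th1 thX Y_def in auto)
    finally have "(norm (g - e))^2 \<le> 1" by (simp add: power2_norm_eq_inner)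
    then have "norm (g - e) \<le> 1" by (simp add: power_le_one_iff)
    moreover have "a - (x + e) = g - e" by (simp add: g_def)
    ultimately show "dist a (x + e) \<le> 1" by (metis dist_norm)
  qed
  then have "(x + e) \<bullet> w \<le> x \<bullet> w" using mx by blast
  moreover have "(x + e) \<bullet> w = x \<bullet> w + th * (al + ss)"
    by (simp add: e_def al_def inner_add_left ww)
  moreover have "al + ss > 0" using Ypos by (simp add: Y_def ss_def)
  ultimately show False using th0 by (smt (verit) mult_pos_pos) 
qed



lemma msum_union: "msum A B = (\<Union>x\<in>A. \<Union>y\<in>B. {x + y})"
  by (auto simp: msum_def)

lemma compact_mink: "compact L \<Longrightarrow> compact (mink_sym u L)"
  unfolding mink_sym_def msum_def
  by (intro compact_sums compact_scaling compact_continuous_image linear_continuous_on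
      linear_refl bounded_linear_inner_left linear_conv_bounded_linear[THEN iffD1])

lemma convex_mink: "convex L \<Longrightarrow> convex (mink_sym u L)"
  unfolding mink_sym_def msum_union
  by (intro convex_sums convex_scaling convex_linear_image linear_refl)

lemma exists_max:
  assumes "compact K" "K \<noteq> {}"
  obtains x where "x \<in> K" "\<forall>k\<in>K. k \<bullet> w \<le> x \<bullet> w"
proof -
  have "continuous_on K (\<lambda>k. k \<bullet> w)" by (intro continuous_intros)
  then show ?thesis using continuous_attains_sup[OF assms] that by blast
qed

lemma mink_sup:
  fixes u :: "'a::euclidean_space"
  assumes u: "norm u = 1" and KA: "K = cdual A" and ne: "K \<noteq> {}" and nu: "K \<noteq> UNIV"
  shows "cdual (mink_sym u K) \<subseteq> mink_sym u (cdual K)"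
proof
  fix z assume z: "z \<in> cdual (mink_sym u K)"
  have "A \<noteq> {}" using nu KA cdual_empty by auto
  then have cK: "compact K" using KA compact_cdual by auto
  have LK: "cdual K = cdual (cdual A)" using KA by simp
  have cL: "compact (cdual K)" using ne compact_cdual by auto
  define S where "S = mink_sym u (cdual K)"
  have cS: "closed S" "convex S" unfolding S_def
    using compact_mink[OF cL] convex_mink[OF convex_cdual] compact_imp_closed by auto
  have key: "\<exists>q\<in>mink_sym u K. q - w \<in> S" if w: "norm w = 1" for w
  proof -
    define w2 where "w2 = refl_hyp u w"
    have w2n: "norm w2 = 1" using w refl_norm[OF u] by (simp add: w2_def)
    obtain x1 where x1: "x1 \<in> K" "\<forall>k\<in>K. k \<bullet> w \<le> x1 \<bullet> w" using exists_max[OF cK ne] by blast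
    obtain x2 where x2: "x2 \<in> K" "\<forall>k\<in>K. k \<bullet> w2 \<le> x2 \<bullet> w2" using exists_max[OF cK ne] by blast
    have y1: "x1 - w \<in> cdual K" using support_ball[OF w, of x1 A] x1 KA LK by simp
    have y2: "x2 - w2 \<in> cdual K" using support_ball[OF w2n, of x2 A] x2 KA LK by simp
    define q where "q = (1/2) *\<^sub>R x1 + (1/2) *\<^sub>R refl_hyp u x2"
    have q: "q \<in> mink_sym u K" using x1 x2 by (auto simp: mink_mem q_def)
    have "refl_hyp u (x2 - w2) = refl_hyp u x2 - w"
      by (simp add: refl_diff w2_def refl_refl[OF u])
    moreover have "q - w = (1/2) *\<^sub>R (x1 - w) + (1/2) *\<^sub>R (refl_hyp u x2 - w)"
      by (simp add: q_def algebra_simps scaleR_add_left[symmetric])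
    ultimately have "q - w = (1/2) *\<^sub>R (x1 - w) + (1/2) *\<^sub>R refl_hyp u (x2 - w2)"
      by simp
    then have "q - w \<in> S" using y1 y2 by (auto simp: S_def mink_mem)
    with q show ?thesis by blast
  qed
  show "z \<in> mink_sym u (cdual K)"
  proof (rule ccontr)
    assume "z \<notin> mink_sym u (cdual K)"
    then obtain a b where ab: "a \<bullet> z < b" "\<forall>x\<in>S. b < a \<bullet> x"
      using separating_hyperplane_closed_point[OF cS(2) cS(1), of z] unfolding S_def by blast
    obtain q0 where "q0 - u \<in> S" using key[OF u] by blast
    then have "a \<noteq> 0" using ab by (metis inner_zero_left order_less_asym)
    then have na: "norm a > 0" by simp
    define w where "w = (1 / norm a) *\<^sub>R a"
    have wn: "norm w = 1" using na by (simp add: w_def)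
    obtain q where q: "q \<in> mink_sym u K" "q - w \<in> S" using key[OF wn] by blast
    have aw: "a \<bullet> w = norm a"
      using na by (simp add: w_def power2_norm_eq_inner[symmetric] power2_eq_square)
    have "b < a \<bullet> (q - w)" using ab q by blast
    then have "a \<bullet> (q - z) > norm a" using ab aw by (simp add: inner_diff_right)
    moreover have "a \<bullet> (q - z) \<le> norm a * norm (q - z)" by (rule Cauchy_Schwarz_ineq2[THEN order_trans[OF abs_ge_self]])
    moreover have "norm (q - z) \<le> 1" using z q by (auto simp: cdual_mem dist_norm)
    ultimately have "norm a < norm a * norm (q - z)" by linarith
    then have "norm a * 1 < norm a * norm (q - z)" by simp
    then have "1 < norm (q - z)" using na by (simp only: mult_less_cancel_left_pos)
    then show False using \<open>norm (q - z) \<le> 1\<close> by simp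
  qed
qed



lemma meas1:
  fixes u :: "'a::euclidean_space" and S :: "'a set"
  assumes [measurable]: "S \<in> sets borel"
  shows "(\<lambda>(x::'a, t::real). indicator {x. x \<bullet> u \<in> {0..1}} x * indicator S (x + t *\<^sub>R u) :: ennreal)
          \<in> borel_measurable (lborel \<Otimes>\<^sub>M lborel)"
  by measurable

lemma meas2:
  fixes u :: "'a::euclidean_space" and S :: "'a set"
  assumes [measurable]: "S \<in> sets borel"
  shows "(\<lambda>(y::'a, t::real). indicator {x. x \<bullet> u \<in> {0..1}} (y - t *\<^sub>R u) * indicator S y :: ennreal)
          \<in> borel_measurable (lborel \<Otimes>\<^sub>M lborel)"
  by measurable


lemma fiber_formula:
  fixes u :: "'a::euclidean_space" and S :: "'a set"
  assumes u: "norm u = 1" and S[measurable]: "S \<in> sets borel"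
  shows "emeasure lborel S = (\<integral>\<^sup>+x. indicator {x. x \<bullet> u \<in> {0..1}} x * emeasure lborel {t::real. x + t *\<^sub>R u \<in> S} \<partial>lborel)"
proof -
  define sl where "sl = {x::'a. x \<bullet> u \<in> {0..1}}"
  have uu: "u \<bullet> u = 1" using u by (simp add: norm_eq_1)
  have e1: "indicator sl x * emeasure lborel {t::real. x + t *\<^sub>R u \<in> S}
      = (\<integral>\<^sup>+t. indicator sl x * indicator S (x + t *\<^sub>R u) \<partial>lborel)" for x
  proof -
    have m: "{t::real. x + t *\<^sub>R u \<in> S} \<in> sets lborel" by measurable
    have "emeasure lborel {t::real. x + t *\<^sub>R u \<in> S} = (\<integral>\<^sup>+t. indicator {t::real. x + t *\<^sub>R u \<in> S} t \<partial>lborel)"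
      using m by simp
    also have "\<dots> = (\<integral>\<^sup>+t. indicator S (x + t *\<^sub>R u) \<partial>lborel)"
      by (rule nn_integral_cong) (simp add: indicator_def)
    finally show ?thesis
      by (simp add: nn_integral_cmult)
  qed
  have e2: "(\<integral>\<^sup>+x. indicator sl x * indicator S (x + t *\<^sub>R u) \<partial>lborel)
     = (\<integral>\<^sup>+y. indicator sl (y - t *\<^sub>R u) * indicator S y \<partial>lborel)" for t :: real
  proof -
    have "(\<integral>\<^sup>+x. indicator sl x * indicator S (x + t *\<^sub>R u) \<partial>lborel)
      = (\<integral>\<^sup>+x. indicator sl x * indicator S (x + t *\<^sub>R u) \<partial>(distr lborel borel ((+) (- (t *\<^sub>R u)))))"
      by (simp add: lborel_distr_plus)
    also have "\<dots> = (\<integral>\<^sup>+y. indicator sl (- (t *\<^sub>R u) + y) * indicator S (- (t *\<^sub>R u) + y + t *\<^sub>R u) \<partial>lborel)"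
      by (rule nn_integral_distr) (auto simp: sl_def)
    also have "\<dots> = (\<integral>\<^sup>+y. indicator sl (y - t *\<^sub>R u) * indicator S y \<partial>lborel)"
      by (simp add: algebra_simps)
    finally show ?thesis .
  qed
  have e3: "(\<integral>\<^sup>+t. indicator sl (y - t *\<^sub>R u) * indicator S y \<partial>lborel) = indicator S y" for y
  proof -
    have "(\<integral>\<^sup>+t. indicator sl (y - t *\<^sub>R u) * indicator S y \<partial>lborel)
        = (\<integral>\<^sup>+t. indicator {y \<bullet> u - 1 .. y \<bullet> u} t * indicator S y \<partial>lborel)"
      by (rule nn_integral_cong) (auto simp: sl_def indicator_def inner_diff_left uu)
    also have "\<dots> = (\<integral>\<^sup>+t. indicator {y \<bullet> u - 1 .. y \<bullet> u} t \<partial>lborel) * indicator S y"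
      by (simp add: nn_integral_multc)
    also have "\<dots> = indicator S y" by simp
    finally show ?thesis .
  qed
  have "(\<integral>\<^sup>+x. indicator sl x * emeasure lborel {t::real. x + t *\<^sub>R u \<in> S} \<partial>lborel)
      = (\<integral>\<^sup>+x. (\<integral>\<^sup>+t. indicator sl x * indicator S (x + t *\<^sub>R u) \<partial>lborel) \<partial>lborel)"
    by (simp add: e1)
  also have "\<dots> = (\<integral>\<^sup>+t. (\<integral>\<^sup>+x. indicator sl x * indicator S (x + t *\<^sub>R u) \<partial>lborel) \<partial>lborel)"
    using lborel_pair.Fubini'[OF meas1[OF S, of u]] by (simp add: sl_def)
  also have "\<dots> = (\<integral>\<^sup>+t. (\<integral>\<^sup>+y. indicator sl (y - t *\<^sub>R u) * indicator S y \<partial>lborel) \<partial>lborel)"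
    by (simp add: e2)
  also have "\<dots> = (\<integral>\<^sup>+y. (\<integral>\<^sup>+t. indicator sl (y - t *\<^sub>R u) * indicator S y \<partial>lborel) \<partial>lborel)"
    using lborel_pair.Fubini'[OF meas2[OF S, of u]] by (simp add: sl_def)
  also have "\<dots> = emeasure lborel S" by (simp add: e3)
  finally show ?thesis by (simp add: sl_def)
qed



lemma fiber_ineq:
  fixes u x :: "'a::euclidean_space" and L :: "'a set"
  assumes u: "norm u = 1" and cL: "compact L" and vL: "convex L"
  shows "emeasure lborel {t::real. x + t *\<^sub>R u \<in> L} \<le> emeasure lborel {t::real. x + t *\<^sub>R u \<in> mink_sym u L}"
proof (cases "{t::real. x + t *\<^sub>R u \<in> L} = {}")
  case True then show ?thesis by simp
next
  case False
  define F where "F = {t::real. x + t *\<^sub>R u \<in> L}"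
  have uu: "u \<bullet> u = 1" using u by (simp add: norm_eq_1)
  have clF: "closed F"
  proof -
    have "F = (\<lambda>t. x + t *\<^sub>R u) -` L" by (auto simp: F_def)
    moreover have "closed ((\<lambda>t::real. x + t *\<^sub>R u) -` L)"
      by (rule continuous_closed_vimage) (auto intro!: continuous_intros compact_imp_closed cL)
    ultimately show ?thesis by simp
  qed
  obtain B where B: "\<forall>y\<in>L. norm y \<le> B" using compact_imp_bounded[OF cL] bounded_iff by blast
  have bdF: "\<bar>t\<bar> \<le> B + norm x" if "t \<in> F" for t
  proof -
    have "\<bar>t\<bar> = norm ((x + t *\<^sub>R u) - x)" using u by simp
    also have "\<dots> \<le> norm (x + t *\<^sub>R u) + norm x" by (rule norm_triangle_ineq4)
    also have "\<dots> \<le> B + norm x" using B that by (auto simp: F_def)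
    finally show ?thesis .
  qed
  have bb: "bdd_below F" "bdd_above F"
    using bdF unfolding bdd_below_def bdd_above_def by (metis abs_le_D1 abs_le_D2 minus_le_iff)+
  have Fne: "F \<noteq> {}" using False by (simp add: F_def)
  define a where "a = Inf F"
  define b where "b = Sup F"
  have aF: "a \<in> F" using closed_contains_Inf[OF Fne bb(1) clF] by (simp add: a_def)
  have bF: "b \<in> F" using closed_contains_Sup[OF Fne bb(2) clF] by (simp add: b_def)
  have Fab: "F \<subseteq> {a..b}" using bb by (auto simp: a_def b_def intro: cInf_lower cSup_upper)
  have ab: "a \<le> b" using Fab aF by auto
  have seg: "s \<in> F" if "a \<le> s" "s \<le> b" for s
  proof (cases "a = b")
    case True then show ?thesis using that aF by simp
  next
    case False
    then have ab': "a < b" using ab by simp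
    define m where "m = (s - a) / (b - a)"
    have m0: "0 \<le> m" "m \<le> 1" using that ab' by (auto simp: m_def divide_le_eq_1)
    have "(1 - m) *\<^sub>R (x + a *\<^sub>R u) + m *\<^sub>R (x + b *\<^sub>R u) \<in> L"
      using vL aF bF m0 by (auto simp: F_def convex_def)
    moreover have "(1 - m) * a + m * b = s"
    proof -
      have "(1 - m) * a + m * b = a + m * (b - a)" by (simp add: algebra_simps)
      also have "m * (b - a) = s - a" using ab' by (simp add: m_def)
      finally show ?thesis by simp
    qed
    moreover have "(1 - m) *\<^sub>R (x + a *\<^sub>R u) + m *\<^sub>R (x + b *\<^sub>R u) = x + ((1 - m) * a + m * b) *\<^sub>R u"
      by (simp add: algebra_simps)
    ultimately show ?thesis by (simp add: F_def)
  qed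
  define r where "r = (b - a) / 2"
  define c where "c = - (x \<bullet> u)"
  have sub: "{c - r .. c + r} \<subseteq> {t::real. x + t *\<^sub>R u \<in> mink_sym u L}"
  proof
    fix \<tau> assume "\<tau> \<in> {c - r .. c + r}"
    then have tr: "- r \<le> \<tau> - c" "\<tau> - c \<le> r" by auto
    define t where "t = \<tau> - c"
    define s1 where "s1 = (a + b) / 2 + t"
    define s2 where "s2 = (a + b) / 2 - t"
    have s1: "s1 \<in> F" by (rule seg) (use tr in \<open>auto simp: s1_def t_def r_def field_simps\<close>)
    have s2: "s2 \<in> F" by (rule seg) (use tr in \<open>auto simp: s2_def t_def r_def field_simps\<close>)
    have "u - 2 *\<^sub>R u = - u" by (simp add: scaleR_2)
    then have Ru: "refl_hyp u u = - u" using uu by (simp add: refl_hyp_def)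
    have "(1/2) *\<^sub>R (x + s1 *\<^sub>R u) + (1/2) *\<^sub>R refl_hyp u (x + s2 *\<^sub>R u)
        = (1/2) *\<^sub>R (x + refl_hyp u x) + ((s1 - s2)/2) *\<^sub>R u"
      by (simp add: refl_add refl_scale Ru algebra_simps diff_divide_distrib)
    also have "\<dots> = x + \<tau> *\<^sub>R u"
    proof -
      have e1: "(s1 - s2)/2 = \<tau> + x \<bullet> u" by (simp add: s1_def s2_def t_def c_def)
      have "x + refl_hyp u x = 2 *\<^sub>R x - (2*(x \<bullet> u)) *\<^sub>R u"
        by (simp add: refl_hyp_def scaleR_2)
      then have e2: "(1/2) *\<^sub>R (x + refl_hyp u x) = x - (x \<bullet> u) *\<^sub>R u"
        by (simp add: scaleR_diff_right)
      show ?thesis unfolding e1 e2 by (simp add: algebra_simps)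
    qed
    finally have "x + \<tau> *\<^sub>R u = (1/2) *\<^sub>R (x + s1 *\<^sub>R u) + (1/2) *\<^sub>R refl_hyp u (x + s2 *\<^sub>R u)" ..
    then show "\<tau> \<in> {t::real. x + t *\<^sub>R u \<in> mink_sym u L}"
      using s1 s2 by (auto simp: mink_mem F_def)
  qed
  have "emeasure lborel F \<le> emeasure lborel {a..b}" by (rule emeasure_mono[OF Fab]) simp
  also have "\<dots> = ennreal (b - a)" using ab by simp
  also have "\<dots> = emeasure lborel {c - r .. c + r}"
  proof -
    have "c - r \<le> c + r" "(c + r) - (c - r) = b - a" using ab by (auto simp: r_def field_simps)
    then show ?thesis by (simp only: emeasure_lborel_Icc)
  qed
  also have "\<dots> \<le> emeasure lborel {t::real. x + t *\<^sub>R u \<in> mink_sym u L}"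
  proof (rule emeasure_mono[OF sub])
    have "closed (mink_sym u L)" by (rule compact_imp_closed[OF compact_mink[OF cL]])
    then have [measurable]: "mink_sym u L \<in> sets borel" by simp
    show "{t::real. x + t *\<^sub>R u \<in> mink_sym u L} \<in> sets lborel" by measurable
  qed
  finally show ?thesis by (simp add: F_def)
qed

lemma vol_mink:
  fixes u :: "'a::euclidean_space" and L :: "'a set"
  assumes u: "norm u = 1" and cL: "compact L" and vL: "convex L"
  shows "emeasure lebesgue L \<le> emeasure lebesgue (mink_sym u L)"
proof -
  have mL[measurable]: "L \<in> sets borel" using compact_imp_closed[OF cL] by simp
  have mM[measurable]: "mink_sym u L \<in> sets borel"
    using compact_imp_closed[OF compact_mink[OF cL]] by simp
  have "emeasure lborel L \<le> emeasure lborel (mink_sym u L)"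
    unfolding fiber_formula[OF u mL] fiber_formula[OF u mM]
    by (intro nn_integral_mono mult_left_mono fiber_ineq[OF u cL vL]) simp_all
  then show ?thesis by simp
qed

lemma mink_empty: "mink_sym u {} = {}"
  by (auto simp: mink_mem)

lemma mink_UNIV: "norm u = 1 \<Longrightarrow> mink_sym u UNIV = UNIV"
proof -
  assume u: "norm u = 1"
  have "z \<in> mink_sym u UNIV" for z
  proof -
    have "z = (1/2) *\<^sub>R z + (1/2) *\<^sub>R refl_hyp u (refl_hyp u z)"
      by (simp add: refl_refl[OF u] scaleR_add_left[symmetric])
    then show ?thesis by (auto simp: mink_mem)
  qed
  then show ?thesis by blast
qed

lemma empty_bb:
  fixes u :: "'a::euclidean_space"
  assumes u: "norm u = 1"
  shows "({}::'a set) \<in> ball_bodies"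
proof -
  have "cdual {0, 3 *\<^sub>R u} = ({}::'a set)"
  proof (rule ccontr)
    assume "cdual {0, 3 *\<^sub>R u} \<noteq> ({}::'a set)"
    then obtain y where y: "y \<in> cdual {0, 3 *\<^sub>R u}" by blast
    then have "dist 0 y \<le> 1" "dist (3 *\<^sub>R u) y \<le> 1" by (auto simp: cdual_mem)
    then have "dist 0 (3 *\<^sub>R u) \<le> 2" by (metis dist_commute dist_triangle order_trans add_mono one_add_one)
    then show False using u by simp
  qed
  then show ?thesis unfolding ball_bodies_def by (metis (mono_tags, lifting) mem_Collect_eq)
qed

lemma UNIV_bb: "UNIV \<in> ball_bodies"
  unfolding ball_bodies_def using cdual_empty by blast

theorem lemma2p1:
  fixes u :: "'a::euclidean_space" and K :: "'a set"
  assumes "norm u = 1" and "K \<in> ball_bodies"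
  shows "mink_sym u K \<in> ball_bodies
    \<and> mink_sym u (cdual K) = cdual (mink_sym u K)
    \<and> emeasure lebesgue (mink_sym u (cdual K)) \<ge> emeasure lebesgue (cdual K)"
proof -
  note u = assms(1)
  obtain A where KA: "K = cdual A" using assms(2) unfolding ball_bodies_def by blast
  show ?thesis
  proof (cases "K = {}")
    case True
    then show ?thesis using empty_bb[OF u] by (simp add: mink_empty cdual_empty mink_UNIV[OF u])
  next
    case ne: False
    show ?thesis
    proof (cases "K = UNIV")
      case True
      then show ?thesis using UNIV_bb by (simp add: mink_empty cdual_UNIV mink_UNIV[OF u])
    next
      case nu: False
      have eq: "mink_sym u (cdual K) = cdual (mink_sym u K)"
        using mink_sub[OF u, of K] mink_sup[OF u KA ne nu] by blast
      have cc: "cdual (cdual K) = K" using bb_cc[OF assms(2)] .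
      have ne': "cdual K \<noteq> {}" using cc nu cdual_empty by auto
      have nu': "cdual K \<noteq> UNIV" using cc ne cdual_UNIV by auto
      have "mink_sym u K = cdual (mink_sym u (cdual K))"
        using mink_sub[OF u, of "cdual K"] mink_sup[OF u refl ne' nu'] cc by auto
      then have mem: "mink_sym u K \<in> ball_bodies" unfolding ball_bodies_def by blast
      have vol: "emeasure lebesgue (cdual K) \<le> emeasure lebesgue (mink_sym u (cdual K))"
        by (rule vol_mink[OF u compact_cdual[OF ne] convex_cdual])
      show ?thesis using mem eq vol by simp
    qed
  qed
qed

end
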